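(* Let $C$ be an absolutely continuous bivariate copula with density $c(x,y)$, and suppose there is a real number $K>0$ such that $c(x,y)\ge K$ on a subset of $[0,1]^2$ of Lebesgue measure $1$. Then for every positive integer $n$, the density $c^n$ of the $n$-fold product $C^n$ satisfies $c^n(x,y)\ge K^n$ (on a set of Lebesgue measure $1$), and $C^n(x,y)\ge xyK^n$ for all $(x,y)\in[0,1]^2$.
   Context: A bivariate copula is a bivariate distribution function on $[0,1]^2$ with uniform marginals on $[0,1]$. For copulas $C,D$, the fold product is $C*D(x,y)=\int_0^1 C_{,2}(x,t)D_{,1}(t,y)\,dt$, where $C_{,i}$ denotes the partial derivative with respect to the $i$-th variable. The $n$-fold product is defined by $C^1=C$ and $C^n=C^{n-1}*C$ for $n>1$; $c^n$ denotes the density of $C^n$. *)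

theory Defs
  imports "HOL-Analysis.Analysis"
begin

text \<open>A bivariate copula, represented as a real function of two real variables;
  only its values on the unit square matter.\<close>
definition is_copula :: "(real \<Rightarrow> real \<Rightarrow> real) \<Rightarrow> bool" where
  "is_copula C \<longleftrightarrow>
     (\<forall>u\<in>{0..1}. C u 0 = 0 \<and> C 0 u = 0 \<and> C u 1 = u \<and> C 1 u = u) \<and>
     (\<forall>x1 x2 y1 y2. 0 \<le> x1 \<and> x1 \<le> x2 \<and> x2 \<le> 1 \<and> 0 \<le> y1 \<and> y1 \<le> y2 \<and> y2 \<le> 1 \<longrightarrow>
        C x2 y2 - C x2 y1 - C x1 y2 + C x1 y1 \<ge> 0)"

definition is_density :: "(real \<Rightarrow> real \<Rightarrow> real) \<Rightarrow> (real \<times> real \<Rightarrow> real) \<Rightarrow> bool" where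
  "is_density C d \<longleftrightarrow>
     set_integrable lborel ({0..1} \<times> {0..1}) d \<and>
     (\<forall>x\<in>{0..1}. \<forall>y\<in>{0..1}. C x y = set_lebesgue_integral lborel ({0..x} \<times> {0..y}) d)"

definition fold_prod :: "(real \<Rightarrow> real \<Rightarrow> real) \<Rightarrow> (real \<Rightarrow> real \<Rightarrow> real) \<Rightarrow> real \<Rightarrow> real \<Rightarrow> real" where
  "fold_prod C D x y =
     set_lebesgue_integral lebesgue {0..1} (\<lambda>t. deriv (\<lambda>s. C x s) t * deriv (\<lambda>s. D s y) t)"

text \<open>n-fold product: C^1 = C, C^(n+1) = C^n * C (the value at n = 0 is irrelevant).\<close>
fun fold_pow :: "(real \<Rightarrow> real \<Rightarrow> real) \<Rightarrow> nat \<Rightarrow> real \<Rightarrow> real \<Rightarrow> real" where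
  "fold_pow C 0 = C"
| "fold_pow C (Suc 0) = C"
| "fold_pow C (Suc (Suc n)) = fold_prod (fold_pow C (Suc n)) C"

end

theory Submission
  imports Defs
begin


lemma density_aux:
  fixes E :: "real set" and k :: real
  assumes E: "E \<in> lmeasurable" and k: "k > 0"
  shows "negligible {x \<in> E. \<forall>r>0. \<exists>d. 0 < d \<and> d < r \<and>
            k * measure lebesgue (cball x d) < measure lebesgue (cball x d - E)}"
    (is "negligible ?A")
proof (unfold negligible_outer, intro allI impI)
  fix e :: real assume e: "e > 0"
  have Esets: "E \<in> sets lebesgue" using E by (auto simp: fmeasurable_def)
  obtain U where U: "open U" "E \<subseteq> U" "(U - E) \<in> lmeasurable"
     "emeasure lebesgue (U - E) < ennreal (e * k)"
    using sets_lebesgue_outer_open[OF Esets, of "e*k"] e k by auto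
  have Ulm: "U \<in> lmeasurable"
  proof -
    have "E \<union> (U - E) \<in> lmeasurable" using E U(3) by (rule fmeasurable.Un)
    moreover have "E \<union> (U - E) = U" using U(2) by auto
    ultimately show ?thesis by simp
  qed
  define K where "K = {(x,d). x \<in> ?A \<and> 0 < d \<and> cball x d \<subseteq> U \<and>
            k * measure lebesgue (cball x d) < measure lebesgue (cball x d - E)}"
  have cover: "\<exists>i. i \<in> K \<and> x \<in> cball (fst i) (snd i) \<and> snd i < d0"
    if x: "x \<in> ?A" and d0: "0 < d0" for x d0
  proof -
    have "x \<in> U" using x U(2) by auto
    then obtain \<rho> where \<rho>: "\<rho> > 0" "ball x \<rho> \<subseteq> U" using U(1) open_contains_ball by blast
    from x have "\<forall>r>0. \<exists>d. 0 < d \<and> d < r \<and>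
            k * measure lebesgue (cball x d) < measure lebesgue (cball x d - E)" by blast
    then obtain d where d: "0 < d" "d < min d0 \<rho>"
       "k * measure lebesgue (cball x d) < measure lebesgue (cball x d - E)"
      using \<rho> d0 by (meson min_less_iff_conj)
    have "cball x d \<subseteq> ball x \<rho>" using d by (simp add: cball_subset_ball_iff)
    then have "cball x d \<subseteq> U" using \<rho>(2) by blast
    then show ?thesis using d x
      by (intro exI[of _ "(x,d)"]) (auto simp: K_def)
  qed
  obtain C where C: "countable C" "C \<subseteq> K"
     "pairwise (\<lambda>i j. disjnt (cball (fst i) (snd i)) (cball (fst j) (snd j))) C"
     "negligible(?A - (\<Union>i \<in> C. cball (fst i) (snd i)))"
  proof -
    have r: "\<And>i. i \<in> K \<Longrightarrow> 0 < snd i" by (auto simp: K_def)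
    show ?thesis using Vitali_covering_theorem_cballs[of K snd ?A fst, OF r cover] that by blast
  qed
  define B where "B = (\<Union>i \<in> C. cball (fst i) (snd i))"
  have Bsets: "B \<in> sets lebesgue" unfolding B_def
    using C(1) by (intro sets.countable_UN'') auto
  have BU: "B \<subseteq> U"
  proof -
    have "cball (fst i) (snd i) \<subseteq> U" if "i \<in> C" for i
      using C(2) that by (cases i) (auto simp add: K_def subset_iff[of C])
    then show ?thesis by (auto simp: B_def)
  qed
  have Blm: "B \<in> lmeasurable" using Ulm BU Bsets by (rule fmeasurableI2)
  have disj: "disjoint_family_on (\<lambda>i. cball (fst i) (snd i)) C"
    using C(3) unfolding disjoint_family_on_def pairwise_def disjnt_def by auto
  have disj2: "disjoint_family_on (\<lambda>i. cball (fst i) (snd i) - E) C"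
    using disj unfolding disjoint_family_on_def by blast
  have eB: "emeasure lebesgue B = (\<integral>\<^sup>+i. emeasure lebesgue (cball (fst i) (snd i)) \<partial>count_space C)"
    unfolding B_def using C(1) disj by (intro emeasure_UN_countable) auto
  have eBE: "emeasure lebesgue (B - E) = (\<integral>\<^sup>+i. emeasure lebesgue (cball (fst i) (snd i) - E) \<partial>count_space C)"
  proof -
    have "B - E = (\<Union>i \<in> C. cball (fst i) (snd i) - E)" by (auto simp: B_def)
    also have "emeasure lebesgue \<dots> = (\<integral>\<^sup>+i. emeasure lebesgue (cball (fst i) (snd i) - E) \<partial>count_space C)"
      using C(1) disj2 Esets by (intro emeasure_UN_countable) auto
    finally show ?thesis .
  qed
  have pt: "ennreal k * emeasure lebesgue (cball (fst i) (snd i)) \<le> emeasure lebesgue (cball (fst i) (snd i) - E)"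
    if "i \<in> C" for i
  proof -
    have iK: "i \<in> K" using that C(2) by auto
    have lm1: "cball (fst i) (snd i) \<in> lmeasurable" by simp
    have lm2: "cball (fst i) (snd i) - E \<in> lmeasurable" using lm1 Esets by (intro fmeasurable_Diff) auto
    have "k * measure lebesgue (cball (fst i) (snd i)) < measure lebesgue (cball (fst i) (snd i) - E)"
      using iK by (cases i) (simp add: K_def)
    then have "ennreal (k * measure lebesgue (cball (fst i) (snd i))) \<le> ennreal (measure lebesgue (cball (fst i) (snd i) - E))"
      by (intro ennreal_leI) simp
    then show ?thesis using lm1 lm2 k
      by (simp add: emeasure_eq_measure2 ennreal_mult)
  qed
  have "ennreal k * emeasure lebesgue B = (\<integral>\<^sup>+i. ennreal k * emeasure lebesgue (cball (fst i) (snd i)) \<partial>count_space C)"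
    unfolding eB by (simp add: nn_integral_cmult)
  also have "\<dots> \<le> (\<integral>\<^sup>+i. emeasure lebesgue (cball (fst i) (snd i) - E) \<partial>count_space C)"
    using pt by (intro nn_integral_mono) auto
  also have "\<dots> = emeasure lebesgue (B - E)" using eBE by simp
  also have "\<dots> \<le> emeasure lebesgue (U - E)" using BU U(3) by (intro emeasure_mono) auto
  also have "\<dots> < ennreal (e * k)" by fact
  finally have "ennreal k * emeasure lebesgue B < ennreal (e * k)" .
  then have "ennreal (k * measure lebesgue B) < ennreal (e * k)"
    using Blm k by (simp add: emeasure_eq_measure2 ennreal_mult)
  then have "k * measure lebesgue B < e * k"
    using e k by (subst (asm) ennreal_less_iff) auto
  then have mB: "measure lebesgue B < e" using k by (simp add: mult.commute)
  define T where "T = B \<union> (?A - B)"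
  have N: "?A - B \<in> lmeasurable" "measure lebesgue (?A - B) = 0"
    using C(4) unfolding B_def by (auto simp: negligible_imp_measurable negligible_imp_measure0)
  have "T \<in> lmeasurable" unfolding T_def using Blm N by (intro fmeasurable.Un)
  moreover have "measure lebesgue T \<le> measure lebesgue B + measure lebesgue (?A - B)"
    unfolding T_def using Blm N by (intro measure_Un_le) auto
  ultimately show "\<exists>T. ?A \<subseteq> T \<and> T \<in> lmeasurable \<and> measure lebesgue T < e"
    using mB N by (intro exI[of _ T]) (auto simp: T_def)
qed


lemma density_thm:
  fixes E :: "real set"
  assumes E: "E \<in> lmeasurable"
  shows "AE x in lborel. x \<in> E \<longrightarrow> (\<forall>k>0. \<exists>r>0. \<forall>d. 0 < d \<and> d < r \<longrightarrow>
            measure lebesgue (cball x d - E) \<le> k * measure lebesgue (cball x d))"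
proof -
  define A where "A = (\<lambda>n::nat. {x \<in> E. \<forall>r>0. \<exists>d. 0 < d \<and> d < r \<and>
            (1 / Suc n) * measure lebesgue (cball x d) < measure lebesgue (cball x d - E)})"
  have "negligible (\<Union>n. A n)"
    unfolding A_def by (intro negligible_Union_nat density_aux[OF E]) simp
  then have "(\<Union>n. A n) \<in> null_sets lebesgue" using negligible_iff_null_sets by blast
  then have "AE x in lebesgue. x \<notin> (\<Union>n. A n)"
    by (rule AE_not_in)
  then have "AE x in lborel. x \<notin> (\<Union>n. A n)"
    by (simp add: AE_completion_iff)
  then show ?thesis
  proof eventually_elim
    case (elim x)
    show ?case
    proof (intro impI allI)
      fix k :: real assume xE: "x \<in> E" and k: "0 < k"
      show "\<exists>r>0. \<forall>d. 0 < d \<and> d < r \<longrightarrow>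
            measure lebesgue (cball x d - E) \<le> k * measure lebesgue (cball x d)"
      proof (rule ccontr)
        assume H: "\<not> ?thesis"
        obtain n :: nat where n: "inverse (real (Suc n)) < k"
          using reals_Archimedean[OF k] by blast
        have "x \<in> A n"
          unfolding A_def
        proof (intro CollectI conjI allI impI xE)
          fix r :: real assume "0 < r"
          then obtain d where d: "0 < d" "d < r"
            "k * measure lebesgue (cball x d) < measure lebesgue (cball x d - E)"
            using H by (meson not_le)
          have "(1 / Suc n) * measure lebesgue (cball x d) \<le> k * measure lebesgue (cball x d)"
            using n by (intro mult_right_mono) (auto simp: field_simps)
          then show "\<exists>d>0. d < r \<and> 1 / real (Suc n) * measure lebesgue (cball x d)
                 < measure lebesgue (cball x d - E)"
            using d by (intro exI[of _ d]) auto
        qed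
        then show False using elim by auto
      qed
    qed
  qed
qed

lemma int_lower:
  fixes g :: "real \<Rightarrow> real"
  assumes gm: "g \<in> borel_measurable lborel"
    and bnd: "AE t in lborel. t \<in> {0..1} \<longrightarrow> 0 \<le> g t \<and> g t \<le> 1"
    and I: "I \<in> sets borel" "I \<subseteq> {0..1}" and q: "q \<le> 1"
  shows "q * measure lborel I - measure lborel (I - {t\<in>{0..1}. q < g t})
           \<le> set_lebesgue_integral lborel I g"
proof -
  let ?E = "{t\<in>{0..1}. q < g t}"
  have Em: "?E \<in> sets borel" using gm by measurable
  have fI: "emeasure lborel I < \<infinity>"
  proof -
    have "emeasure lborel I \<le> emeasure lborel {0..1::real}" using I(2) by (rule emeasure_mono) simp
    then have "emeasure lborel I \<le> 1" by simp
    moreover have "(1::ennreal) < \<infinity>" by simp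
    ultimately show ?thesis by (rule le_less_trans)
  qed
  have fIE: "emeasure lborel (I - ?E) < \<infinity>"
  proof -
    have "emeasure lborel (I - ?E) \<le> emeasure lborel I" using I(1) by (intro emeasure_mono) auto
    then show ?thesis using fI by (rule le_less_trans)
  qed
  have i1: "integrable lborel (\<lambda>t. indicator I t * q - indicator (I - ?E) t)"
    using fI fIE Em I by (auto intro!: integrable_diff integrable_mult_left integrable_real_indicator)
  have i2: "integrable lborel (\<lambda>t. indicator I t * g t)"
  proof -
    have ab: "AE x in lborel. x \<in> I \<longrightarrow> norm (g x) \<le> 1"
      using bnd by eventually_elim (use I(2) in auto)
    have "I \<in> sets lborel" using I(1) by simp
    from integrableI_bounded_set_indicator[OF this gm fI ab] show ?thesis by simp
  qed
  have "(\<integral>t. indicator I t * q - indicator (I - ?E) t \<partial>lborel) \<le> (\<integral>t. indicator I t * g t \<partial>lborel)"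
  proof (rule integral_mono_AE[OF i1 i2])
    show "AE t in lborel. indicator I t * q - indicator (I - ?E) t \<le> indicator I t * g t"
      using bnd
    proof eventually_elim
      case (elim t)
      show ?case using elim I(2) q by (cases "t \<in> I"; cases "q < g t") (auto simp: indicator_def subset_iff)
    qed
  qed
  also have "(\<integral>t. indicator I t * g t \<partial>lborel) = set_lebesgue_integral lborel I g"
    by (simp add: set_lebesgue_integral_def)
  also have "(\<integral>t. indicator I t * q - indicator (I - ?E) t \<partial>lborel) =
       q * measure lborel I - measure lborel (I - ?E)"
  proof -
    have e1: "integrable lborel (\<lambda>t. indicator I t * q)" using fI I by auto
    have e2: "integrable lborel (indicator (I - ?E) :: real \<Rightarrow> real)" using fIE I Em by auto
    have "(\<integral>t. indicator I t * q - indicator (I - ?E) t \<partial>lborel) =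
       (\<integral>t. indicator I t * q \<partial>lborel) - (\<integral>t. indicator (I - ?E) t \<partial>lborel)"
      using e1 e2 by (rule Bochner_Integration.integral_diff)
    also have "\<dots> = q * measure lborel I - measure lborel (I - ?E)"
      using fI fIE I Em by (simp add: mult.commute)
    finally show ?thesis .
  qed
  finally show ?thesis .
qed

lemma int_upper:
  fixes g :: "real \<Rightarrow> real"
  assumes gm: "g \<in> borel_measurable lborel"
    and bnd: "AE t in lborel. t \<in> {0..1} \<longrightarrow> 0 \<le> g t \<and> g t \<le> 1"
    and I: "I \<in> sets borel" "I \<subseteq> {0..1}" and q: "0 \<le> q"
  shows "set_lebesgue_integral lborel I g \<le>
          q * measure lborel I + measure lborel (I - {t\<in>{0..1}. g t < q})"
proof -
  let ?E = "{t\<in>{0..1}. g t < q}"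
  have Em: "?E \<in> sets borel" using gm by measurable
  have fI: "emeasure lborel I < \<infinity>"
  proof -
    have "emeasure lborel I \<le> emeasure lborel {0..1::real}" using I(2) by (rule emeasure_mono) simp
    then have "emeasure lborel I \<le> 1" by simp
    moreover have "(1::ennreal) < \<infinity>" by simp
    ultimately show ?thesis by (rule le_less_trans)
  qed
  have fIE: "emeasure lborel (I - ?E) < \<infinity>"
  proof -
    have "emeasure lborel (I - ?E) \<le> emeasure lborel I" using I(1) by (intro emeasure_mono) auto
    then show ?thesis using fI by (rule le_less_trans)
  qed
  have i1: "integrable lborel (\<lambda>t. indicator I t * q + indicator (I - ?E) t)"
    using fI fIE Em I by (auto intro!: integrable_add integrable_mult_left integrable_real_indicator)
  have i2: "integrable lborel (\<lambda>t. indicator I t * g t)"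
  proof -
    have ab: "AE x in lborel. x \<in> I \<longrightarrow> norm (g x) \<le> 1"
      using bnd by eventually_elim (use I(2) in auto)
    have "I \<in> sets lborel" using I(1) by simp
    from integrableI_bounded_set_indicator[OF this gm fI ab] show ?thesis by simp
  qed
  have "(\<integral>t. indicator I t * g t \<partial>lborel) \<le> (\<integral>t. indicator I t * q + indicator (I - ?E) t \<partial>lborel)"
  proof (rule integral_mono_AE[OF i2 i1])
    show "AE t in lborel. indicator I t * g t \<le> indicator I t * q + indicator (I - ?E) t"
      using bnd
    proof eventually_elim
      case (elim t)
      show ?case using elim I(2) q by (cases "t \<in> I"; cases "g t < q") (auto simp: indicator_def subset_iff)
    qed
  qed
  also have "(\<integral>t. indicator I t * g t \<partial>lborel) = set_lebesgue_integral lborel I g"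
    by (simp add: set_lebesgue_integral_def)
  also have "(\<integral>t. indicator I t * q + indicator (I - ?E) t \<partial>lborel) =
       q * measure lborel I + measure lborel (I - ?E)"
  proof -
    have e1: "integrable lborel (\<lambda>t. indicator I t * q)" using fI I by auto
    have e2: "integrable lborel (indicator (I - ?E) :: real \<Rightarrow> real)" using fIE I Em by auto
    have "(\<integral>t. indicator I t * q + indicator (I - ?E) t \<partial>lborel) =
       (\<integral>t. indicator I t * q \<partial>lborel) + (\<integral>t. indicator (I - ?E) t \<partial>lborel)"
      using e1 e2 by (rule Bochner_Integration.integral_add)
    also have "\<dots> = q * measure lborel I + measure lborel (I - ?E)"
      using fI fIE I Em by (simp add: mult.commute)
    finally show ?thesis .
  qed
  finally show ?thesis by simp
qed


lemma si_sub:
  fixes g :: "real \<Rightarrow> real"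
  assumes gm: "g \<in> borel_measurable lborel"
    and bnd: "AE t in lborel. t \<in> {0..1} \<longrightarrow> 0 \<le> g t \<and> g t \<le> 1"
    and I: "I \<in> sets borel" "I \<subseteq> {0..1}"
  shows "set_integrable lborel I g"
proof -
  have fI: "emeasure lborel I < \<infinity>"
  proof -
    have "emeasure lborel I \<le> emeasure lborel {0..1::real}" using I(2) by (rule emeasure_mono) simp
    then have "emeasure lborel I \<le> 1" by simp
    moreover have "(1::ennreal) < \<infinity>" by simp
    ultimately show ?thesis by (rule le_less_trans)
  qed
  have ab: "AE x in lborel. x \<in> I \<longrightarrow> norm (g x) \<le> 1"
    using bnd by eventually_elim (use I(2) in auto)
  have "I \<in> sets lborel" using I(1) by simp
  from integrableI_bounded_set_indicator[OF this gm fI ab] show ?thesis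
    by (simp add: set_integrable_def)
qed

lemma measure_Ioc_real: "(l::real) \<le> u \<Longrightarrow> measure lborel {l<..u} = u - l"
  by (simp add: measure_def)

lemma measure_cball_real: "0 \<le> h \<Longrightarrow> measure lebesgue (cball (t::real) h) = 2 * h"
proof -
  assume h: "0 \<le> h"
  have "measure lebesgue (cball t h) = measure lborel {t - h .. t + h}"
    by (simp add: cball_eq_atLeastAtMost)
  also have "\<dots> = 2 * h" using h by (simp add: measure_def)
  finally show ?thesis .
qed

lemma lebesgue_diff:
  fixes g F :: "real \<Rightarrow> real"
  assumes gm: "g \<in> borel_measurable lborel"
    and bnd: "AE t in lborel. t \<in> {0..1} \<longrightarrow> 0 \<le> g t \<and> g t \<le> 1"
    and F: "\<And>s. s \<in> {0..1} \<Longrightarrow> F s = set_lebesgue_integral lborel {0..s} g"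
  shows "AE t in lborel. t \<in> {0<..<1} \<longrightarrow> (F has_real_derivative g t) (at t)"
proof -
  define E where "E = (\<lambda>q. {t\<in>{0..1::real}. q < g t})"
  define E' where "E' = (\<lambda>q. {t\<in>{0..1::real}. g t < q})"
  have Eb: "E q \<in> sets borel" "E' q \<in> sets borel" for q unfolding E_def E'_def using gm by measurable
  have Elm: "E q \<in> lmeasurable" "E' q \<in> lmeasurable" for q
  proof -
    have "{0..1::real} \<in> lmeasurable" by simp
    moreover have "E q \<in> sets lebesgue" "E' q \<in> sets lebesgue" using Eb by auto
    moreover have "E q \<subseteq> {0..1}" "E' q \<subseteq> {0..1}" by (auto simp: E_def E'_def)
    ultimately show "E q \<in> lmeasurable" "E' q \<in> lmeasurable" by (auto intro: fmeasurableI2)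
  qed
  let ?P = "\<lambda>S x. \<forall>k>0. \<exists>r>0. \<forall>d. 0 < d \<and> d < r \<longrightarrow>
            measure lebesgue (cball x d - S) \<le> k * measure lebesgue (cball x d)"
  have AE1: "AE t in lborel. \<forall>q\<in>\<rat>. t \<in> E q \<longrightarrow> ?P (E q) t"
    by (rule AE_ball_countable'[OF _ countable_rat]) (rule density_thm[OF Elm(1)])
  have AE2: "AE t in lborel. \<forall>q\<in>\<rat>. t \<in> E' q \<longrightarrow> ?P (E' q) t"
    by (rule AE_ball_countable'[OF _ countable_rat]) (rule density_thm[OF Elm(2)])
  show ?thesis
    using AE1 AE2 bnd
  proof eventually_elim
    case (elim t)
    show ?case
    proof (intro impI)
      assume t: "t \<in> {0<..<1}"
      then have gt: "0 \<le> g t" "g t \<le> 1" using elim(3) by auto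
      show "(F has_real_derivative g t) (at t)"
        unfolding has_field_derivative_iff
      proof (rule LIM_I)
        fix \<epsilon> :: real assume \<epsilon>: "0 < \<epsilon>"
        obtain q1 where q1: "q1 \<in> \<rat>" "g t - \<epsilon>/2 < q1" "q1 < g t"
          using Rats_dense_in_real[of "g t - \<epsilon>/2" "g t"] \<epsilon> by auto
        obtain q2 where q2: "q2 \<in> \<rat>" "g t < q2" "q2 < g t + \<epsilon>/2"
          using Rats_dense_in_real[of "g t" "g t + \<epsilon>/2"] \<epsilon> by auto
        have tE: "t \<in> E q1" "t \<in> E' q2" using t q1 q2 by (auto simp: E_def E'_def)
        have "?P (E q1) t" using elim(1) q1(1) tE(1) by blast
        then have "\<exists>r>0. \<forall>d. 0 < d \<and> d < r \<longrightarrow>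
            measure lebesgue (cball t d - E q1) \<le> \<epsilon>/4 * measure lebesgue (cball t d)"
          using \<epsilon> by (simp only: divide_pos_pos zero_less_numeral)
        then obtain r1 where r1: "r1 > 0" "\<And>d. 0 < d \<Longrightarrow> d < r1 \<Longrightarrow>
            measure lebesgue (cball t d - E q1) \<le> \<epsilon>/4 * measure lebesgue (cball t d)"
          by blast
        have "?P (E' q2) t" using elim(2) q2(1) tE(2) by blast
        then have "\<exists>r>0. \<forall>d. 0 < d \<and> d < r \<longrightarrow>
            measure lebesgue (cball t d - E' q2) \<le> \<epsilon>/4 * measure lebesgue (cball t d)"
          using \<epsilon> by (simp only: divide_pos_pos zero_less_numeral)
        then obtain r2 where r2: "r2 > 0" "\<And>d. 0 < d \<Longrightarrow> d < r2 \<Longrightarrow>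
            measure lebesgue (cball t d - E' q2) \<le> \<epsilon>/4 * measure lebesgue (cball t d)"
          by blast
        define s where "s = min (min r1 r2) (min t (1 - t))"
        have s: "s > 0" using r1 r2 t by (auto simp: s_def)
        show "\<exists>s>0. \<forall>x. x \<noteq> t \<and> norm (x - t) < s \<longrightarrow> norm ((F x - F t) / (x - t) - g t) < \<epsilon>"
        proof (intro exI[of _ s] conjI allI impI s)
          fix y assume y: "y \<noteq> t \<and> norm (y - t) < s"
          define h where "h = \<bar>y - t\<bar>"
          have h: "0 < h" "h < r1" "h < r2" "h < t" "h < 1 - t"
            using y by (auto simp: h_def s_def)
          have y01: "y \<in> {0..1}" using h t by (auto simp: h_def)
          have t01: "t \<in> {0..1}" using t by auto
          define I where "I = (if t < y then {t<..y} else {y<..t})"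
          have Ib: "I \<in> sets borel" by (simp add: I_def)
          have I01: "I \<subseteq> {0..1}" using y01 t01 by (auto simp: I_def)
          have Ic: "I \<subseteq> cball t h" by (cases "t < y") (auto simp: I_def h_def dist_real_def)
          have mI: "measure lborel I = h" using y by (cases "t < y") (auto simp: I_def h_def measure_Ioc_real)
          have mc: "measure lebesgue (cball t h) = 2 * h" using measure_cball_real[of h t] h by simp
          have cbf: "cball t h \<in> fmeasurable lborel"
            by (simp add: cball_eq_atLeastAtMost fmeasurable_def emeasure_lborel_Icc_eq)
          have si: "set_integrable lborel S g" if "S \<in> sets borel" "S \<subseteq> {0..1}" for S
            using si_sub[OF gm bnd that] .
          have Fdiff: "(F y - F t) / (y - t) = set_lebesgue_integral lborel I g / h"
          proof (cases "t < y")
            case True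
            have "F y = set_lebesgue_integral lborel ({0..t} \<union> {t<..y}) g"
              proof -
              have "{0..y} = {0..t} \<union> {t<..y}" using True t01 by auto
              then show ?thesis using F[OF y01] by simp
            qed
            also have "\<dots> = set_lebesgue_integral lborel {0..t} g + set_lebesgue_integral lborel {t<..y} g"
              using t01 y01 by (intro set_integral_Un si) auto
            finally show ?thesis using True F[OF t01] by (simp add: I_def h_def)
          next
            case False
            then have yt: "y < t" using y by auto
            have "F t = set_lebesgue_integral lborel ({0..y} \<union> {y<..t}) g"
              proof -
              have "{0..t} = {0..y} \<union> {y<..t}" using yt y01 by auto
              then show ?thesis using F[OF t01] by simp
            qed
            also have "\<dots> = set_lebesgue_integral lborel {0..y} g + set_lebesgue_integral lborel {y<..t} g"
              using t01 y01 by (intro set_integral_Un si) auto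
            finally have "F y - F t = - set_lebesgue_integral lborel I g"
              using yt F[OF y01] by (simp add: I_def)
            moreover have "y - t = - h" using yt by (simp add: h_def)
            ultimately show ?thesis by simp
          qed
          have low: "q1 * h - \<epsilon> / 2 * h \<le> set_lebesgue_integral lborel I g"
          proof -
            have "measure lborel (I - E q1) \<le> measure lborel (cball t h - E q1)"
              using Ic Ib Eb cbf by (intro measure_mono_fmeasurable) (auto intro!: fmeasurable_Diff)
            also have "\<dots> = measure lebesgue (cball t h - E q1)" using Eb by simp
            also have "\<dots> \<le> \<epsilon>/4 * (2 * h)" using r1(2)[of h] h mc by simp
            finally have "measure lborel (I - E q1) \<le> \<epsilon> / 2 * h" by simp
            moreover have "q1 * measure lborel I - measure lborel (I - E q1)
                \<le> set_lebesgue_integral lborel I g"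
              unfolding E_def using int_lower[OF gm bnd Ib I01] q1 gt by simp
            ultimately show ?thesis using mI by simp
          qed
          have up: "set_lebesgue_integral lborel I g \<le> q2 * h + \<epsilon> / 2 * h"
          proof -
            have "measure lborel (I - E' q2) \<le> measure lborel (cball t h - E' q2)"
              using Ic Ib Eb cbf by (intro measure_mono_fmeasurable) (auto intro!: fmeasurable_Diff)
            also have "\<dots> = measure lebesgue (cball t h - E' q2)" using Eb by simp
            also have "\<dots> \<le> \<epsilon>/4 * (2 * h)" using r2(2)[of h] h mc by simp
            finally have "measure lborel (I - E' q2) \<le> \<epsilon> / 2 * h" by simp
            moreover have "set_lebesgue_integral lborel I g \<le>
                q2 * measure lborel I + measure lborel (I - E' q2)"
              unfolding E'_def using int_upper[OF gm bnd Ib I01] q2 gt by simp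
            ultimately show ?thesis using mI by simp
          qed
          have "q1 - \<epsilon>/2 \<le> set_lebesgue_integral lborel I g / h"
            using low h by (simp add: field_simps)
          moreover have "set_lebesgue_integral lborel I g / h \<le> q2 + \<epsilon>/2"
            using up h by (simp add: field_simps)
          ultimately show "norm ((F y - F t) / (y - t) - g t) < \<epsilon>"
            unfolding Fdiff using q1 q2 by (simp add: abs_less_iff)
        qed
      qed
    qed
  qed
qed


lemma unique_atMost:
  fixes f f' :: "'a::ordered_euclidean_space \<Rightarrow> real"
  assumes fi: "integrable lborel f" and fi': "integrable lborel f'"
    and eq: "\<And>a. set_lebesgue_integral lborel {..a} f = set_lebesgue_integral lborel {..a} f'"
  shows "AE x in lborel. f x = f' x"
proof -
  define p where "p x = max (f x) 0 + max (- f' x) 0" for x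
  define q where "q x = max (f' x) 0 + max (- f x) 0" for x
  have pi: "integrable lborel p" "integrable lborel q" unfolding p_def q_def using fi fi' by auto
  have pq: "p x - q x = f x - f' x" for x by (simp add: p_def q_def max_def)
  have p0: "0 \<le> p x" "0 \<le> q x" for x by (simp_all add: p_def q_def)
  have pm[measurable]: "p \<in> borel_measurable borel" "q \<in> borel_measurable borel"
    using pi by auto
  have sA: "set_lebesgue_integral lborel A p = set_lebesgue_integral lborel A q"
    if A: "A \<in> sets borel" and eA: "set_lebesgue_integral lborel A f = set_lebesgue_integral lborel A f'" for A
  proof -
    have si: "set_integrable lborel A h" if "integrable lborel h" for h :: "'a \<Rightarrow> real"
      unfolding set_integrable_def using integrable_mult_indicator[of A lborel h] A that by simp
    have "set_lebesgue_integral lborel A p - set_lebesgue_integral lborel A q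
        = set_lebesgue_integral lborel A (\<lambda>x. p x - q x)"
      using si[OF pi(1)] si[OF pi(2)] by (simp add: set_integral_diff)
    also have "\<dots> = set_lebesgue_integral lborel A (\<lambda>x. f x - f' x)" by (simp add: pq)
    also have "\<dots> = set_lebesgue_integral lborel A f - set_lebesgue_integral lborel A f'"
      using si[OF fi] si[OF fi'] by (simp add: set_integral_diff)
    finally show ?thesis using eA by simp
  qed
  have em: "emeasure (density lborel (\<lambda>x. ennreal (p x))) A = ennreal (set_lebesgue_integral lborel A p)"
    "emeasure (density lborel (\<lambda>x. ennreal (q x))) A = ennreal (set_lebesgue_integral lborel A q)"
    if A[measurable]: "A \<in> sets borel" for A
  proof -
    have "emeasure (density lborel (\<lambda>x. ennreal (p x))) A = (\<integral>\<^sup>+ x. ennreal (p x) * indicator A x \<partial>lborel)"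
      by (rule emeasure_density) auto
    also have "\<dots> = (\<integral>\<^sup>+ x. ennreal (indicator A x * p x) \<partial>lborel)"
      by (intro nn_integral_cong) (auto split: split_indicator)
    also have "\<dots> = ennreal (\<integral>x. indicator A x * p x \<partial>lborel)"
      by (rule nn_integral_eq_integral) (use integrable_mult_indicator[of A lborel p] pi p0 in auto)
    finally show "emeasure (density lborel (\<lambda>x. ennreal (p x))) A = ennreal (set_lebesgue_integral lborel A p)"
      by (simp add: set_lebesgue_integral_def)
  next
    have "emeasure (density lborel (\<lambda>x. ennreal (q x))) A = (\<integral>\<^sup>+ x. ennreal (q x) * indicator A x \<partial>lborel)"
      by (rule emeasure_density) auto
    also have "\<dots> = (\<integral>\<^sup>+ x. ennreal (indicator A x * q x) \<partial>lborel)"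
      by (intro nn_integral_cong) (auto split: split_indicator)
    also have "\<dots> = ennreal (\<integral>x. indicator A x * q x \<partial>lborel)"
      by (rule nn_integral_eq_integral) (use integrable_mult_indicator[of A lborel q] pi p0 in auto)
    finally show "emeasure (density lborel (\<lambda>x. ennreal (q x))) A = ennreal (set_lebesgue_integral lborel A q)"
      by (simp add: set_lebesgue_integral_def)
  qed
  have sets_eq: "sets (borel::'a measure) = sigma_sets UNIV (range atMost)"
    by (subst borel_eq_atMost) (rule sets_measure_of, simp)
  have DD: "density lborel (\<lambda>x. ennreal (p x)) = density lborel (\<lambda>x. ennreal (q x))"
  proof (rule measure_eqI_generator_eq[where E="range atMost" and \<Omega>=UNIV and A="\<lambda>i. {..(real i *\<^sub>R One)}"])
    show "Int_stable (range (atMost :: 'a \<Rightarrow> 'a set))"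
      unfolding Int_stable_def
    proof (clarsimp)
      fix a b :: 'a
      show "{..a} \<inter> {..b} \<in> range atMost"
        by (rule range_eqI[of _ _ "inf a b"]) (auto simp: le_inf_iff)
    qed
    show "range atMost \<subseteq> Pow (UNIV :: 'a set)" by simp
    show "emeasure (density lborel (\<lambda>x. ennreal (p x))) X = emeasure (density lborel (\<lambda>x. ennreal (q x))) X"
      if "X \<in> range atMost" for X
      using that em sA eq by auto
    show "sets (density lborel (\<lambda>x. ennreal (p x))) = sigma_sets UNIV (range atMost)"
      using sets_eq by simp
    show "sets (density lborel (\<lambda>x. ennreal (q x))) = sigma_sets UNIV (range atMost)"
      using sets_eq by simp
    show "range (\<lambda>i. {..(real i *\<^sub>R One)}) \<subseteq> range (atMost :: 'a \<Rightarrow> 'a set)" by auto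
    show "(\<Union>i. {..(real i *\<^sub>R (One::'a))}) = UNIV"
    proof (safe)
      fix x :: 'a
      obtain n :: nat where n: "norm x \<le> real n" using real_arch_simple by blast
      have "x \<le> real n *\<^sub>R One"
        unfolding eucl_le[where 'a='a]
      proof (intro ballI)
        fix i :: 'a assume i: "i \<in> Basis"
        have "x \<bullet> i \<le> norm x" using Basis_le_norm[OF i, of x] by simp
        then show "x \<bullet> i \<le> (real n *\<^sub>R One) \<bullet> i" using n i by simp
      qed
      then show "x \<in> (\<Union>i. {..(real i *\<^sub>R (One::'a))})" by auto
    qed simp
    show "emeasure (density lborel (\<lambda>x. ennreal (p x))) {..(real i *\<^sub>R One)} \<noteq> \<infinity>" for i
      using em[of "{..(real i *\<^sub>R One)}"] by simp
  qed
  have "AE x in lborel. ennreal (p x) = ennreal (q x)"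
    using sigma_finite_measure.density_unique[OF sigma_finite_lborel _ _ DD] by simp
  then show ?thesis
  proof eventually_elim
    case (elim x)
    then have "p x = q x" using p0 by (simp add: ennreal_inj)
    then show ?case using pq[of x] by simp
  qed
qed


abbreviation sq :: "(real \<times> real) set" where "sq \<equiv> {0..1::real} \<times> {0..1::real}"

lemma AE_complete_meas:
  fixes f g :: "'a \<Rightarrow> real"
  assumes g: "g \<in> borel_measurable (completion M)" and ae: "AE x in completion M. f x = g x"
  shows "f \<in> borel_measurable (completion M)"
proof (rule borel_measurableI)
  fix S :: "real set" assume S: "open S"
  have A: "g -` S \<inter> space (completion M) \<in> sets (completion M)"
    using measurable_sets[OF g, of S] S by simp
  have "AE x in completion M. x \<in> g -` S \<inter> space (completion M) \<longleftrightarrow> x \<in> f -` S \<inter> space (completion M)"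
    using ae by eventually_elim auto
  from completion.in_sets_AE[OF this A] show "f -` S \<inter> space (completion M) \<in> sets (completion M)"
    by auto
qed

locale dens_setup =
  fixes D :: "real \<Rightarrow> real \<Rightarrow> real" and e :: "real \<times> real \<Rightarrow> real"
  assumes dens: "is_density D e"
    and nonneg: "AE z in lborel. z \<in> sq \<longrightarrow> 0 \<le> e z"
    and bd: "\<And>s. s \<in> {0..1} \<Longrightarrow> D 1 s = s"
begin

definition eh :: "real \<times> real \<Rightarrow> real" where "eh z = indicator sq z * e z"
definition G :: "real \<Rightarrow> real \<Rightarrow> real" where "G x t = (\<integral>u. indicator {0..x} u * eh (u,t) \<partial>lborel)"

lemma eh_int: "integrable lborel eh"
  using dens unfolding is_density_def set_integrable_def eh_def by simp

lemma eh_int2: "integrable (lborel \<Otimes>\<^sub>M lborel) eh"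
  using eh_int by (simp add: lborel_prod)

lemma eh_meas[measurable]: "eh \<in> borel_measurable borel"
  using borel_measurable_integrable[OF eh_int] by simp

lemma eh_meas2[measurable]: "eh \<in> borel_measurable (lborel \<Otimes>\<^sub>M lborel)"
  by (simp add: lborel_prod)

lemma eh_zero: "(u,t) \<notin> sq \<Longrightarrow> eh (u,t) = 0"
  by (simp add: eh_def)

lemma eh_nonneg: "AE z in lborel \<Otimes>\<^sub>M lborel. 0 \<le> eh z"
proof -
  have "AE z in lborel. 0 \<le> eh z" using nonneg
  proof eventually_elim
    case (elim z)
    then show ?case by (cases "z \<in> sq") (simp_all add: eh_def)
  qed
  then show ?thesis unfolding lborel_prod .
qed

lemma AE_int_t: "AE t in lborel. integrable lborel (\<lambda>u. eh (u,t))"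
  using lborel_pair.AE_integrable_snd[of "\<lambda>u t. eh (u,t)"] eh_int2 by simp

lemma AE_nonneg_t: "AE t in lborel. AE u in lborel. 0 \<le> eh (u,t)"
proof -
  have "AE u in lborel. AE t in lborel. 0 \<le> eh (u,t)"
    using lborel_pair.AE_pair[OF eh_nonneg] by simp
  moreover have "{x \<in> space (lborel \<Otimes>\<^sub>M lborel). 0 \<le> eh (fst x, snd x)} \<in> sets (lborel \<Otimes>\<^sub>M lborel)"
    by measurable
  ultimately show ?thesis using lborel_pair.AE_commute[of "\<lambda>u t. 0 \<le> eh (u,t)"] by simp
qed

lemma G_meas[measurable]: "G x \<in> borel_measurable lborel"
  unfolding G_def by measurable

lemma D_eq:
  assumes x: "x \<in> {0..1}" and s: "s \<in> {0..1}"
  shows "set_integrable lborel {0..s} (G x)" "D x s = set_lebesgue_integral lborel {0..s} (G x)"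
proof -
  define \<phi> where "\<phi> u t = indicator {0..x} u * indicator {0..s} t * eh (u,t)" for u t
  have \<phi>eq: "case_prod \<phi> = (\<lambda>z. indicator ({0..x}\<times>{0..s}) z *\<^sub>R eh z)"
    by (auto simp: \<phi>_def fun_eq_iff indicator_times)
  have int\<phi>: "integrable (lborel \<Otimes>\<^sub>M lborel) (case_prod \<phi>)"
    unfolding \<phi>eq by (intro integrable_mult_indicator eh_int2) auto
  have inner: "(\<integral>u. \<phi> u t \<partial>lborel) = indicator {0..s} t * G x t" for t
  proof -
    have "(\<integral>u. \<phi> u t \<partial>lborel) = (\<integral>u. indicator {0..s} t * (indicator {0..x} u * eh (u,t)) \<partial>lborel)"
      by (simp add: \<phi>_def mult_ac)
    also have "\<dots> = indicator {0..s} t * G x t" unfolding G_def by (rule integral_mult_right_zero)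
    finally show ?thesis .
  qed
  show "set_integrable lborel {0..s} (G x)"
    using lborel_pair.integrable_snd[OF int\<phi>] unfolding inner set_integrable_def by simp
  have "D x s = set_lebesgue_integral lborel ({0..x} \<times> {0..s}) e"
    using dens x s unfolding is_density_def by blast
  also have "\<dots> = (\<integral>z. indicator ({0..x}\<times>{0..s}) z *\<^sub>R eh z \<partial>lborel)"
    unfolding set_lebesgue_integral_def using x s
    by (intro Bochner_Integration.integral_cong refl) (auto simp: eh_def indicator_def)
  also have "\<dots> = integral\<^sup>L (lborel \<Otimes>\<^sub>M lborel) (case_prod \<phi>)"
    unfolding \<phi>eq by (simp add: lborel_prod)
  also have "\<dots> = (\<integral>t. (\<integral>u. \<phi> u t \<partial>lborel) \<partial>lborel)"
    using lborel_pair.integral_snd[OF int\<phi>] by simp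
  also have "\<dots> = set_lebesgue_integral lborel {0..s} (G x)"
    unfolding inner set_lebesgue_integral_def by simp
  finally show "D x s = set_lebesgue_integral lborel {0..s} (G x)" .
qed

lemma G1: "AE t in lborel. t \<in> {0..1} \<longrightarrow> G 1 t = 1"
proof -
  define f where "f t = indicator {0..1::real} t * G 1 t" for t
  define f' where "f' t = (indicator {0..1::real} t :: real)" for t
  have fi: "integrable lborel f"
    using D_eq(1)[of 1 1] unfolding set_integrable_def f_def by simp
  have fi': "integrable lborel f'" unfolding f'_def by simp
  have ind: "indicator {..a} t * indicator {0..1} t = (indicator {0..min a 1} t :: real)" for a t :: real
    by (auto simp: indicator_def)
  have "AE x in lborel. f x = f' x"
  proof (rule unique_atMost[OF fi fi'])
    fix a :: real
    have L: "set_lebesgue_integral lborel {..a} f = set_lebesgue_integral lborel {0..min a 1} (G 1)"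
      unfolding set_lebesgue_integral_def f_def
      by (intro Bochner_Integration.integral_cong refl) (auto simp: indicator_def)
    have R: "set_lebesgue_integral lborel {..a} f' = measure lborel {0..min a 1}"
      unfolding set_lebesgue_integral_def f'_def by (simp add: ind)
    show "set_lebesgue_integral lborel {..a} f = set_lebesgue_integral lborel {..a} f'"
    proof (cases "0 \<le> a")
      case True
      then have "min a 1 \<in> {0..1}" by auto
      then show ?thesis unfolding L R using D_eq(2)[of 1 "min a 1"] bd[of "min a 1"] True
        by (simp add: measure_def)
    next
      case False
      then have "{0..min a 1} = {}" by auto
      then show ?thesis unfolding L R by (simp add: set_lebesgue_integral_def)
    qed
  qed
  then show ?thesis by eventually_elim (auto simp: f_def f'_def)
qed

lemma G_bnd:
  assumes x: "x \<in> {0..1}"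
  shows "AE t in lborel. t \<in> {0..1} \<longrightarrow> 0 \<le> G x t \<and> G x t \<le> 1"
  using AE_int_t AE_nonneg_t G1
proof eventually_elim
  case (elim t)
  have i1: "integrable lborel (\<lambda>u. indicator {0..x} u * eh (u,t))"
    using integrable_mult_indicator[OF _ elim(1), of "{0..x}"] by simp
  have i2: "integrable lborel (\<lambda>u. indicator {0..1} u * eh (u,t))"
    using integrable_mult_indicator[OF _ elim(1), of "{0..1}"] by simp
  have "AE u in lborel. 0 \<le> indicator {0..x} u * eh (u,t)"
    using elim(2) by eventually_elim simp
  then have "0 \<le> G x t" unfolding G_def by (rule integral_nonneg_AE)
  moreover have "AE u in lborel. indicator {0..x} u * eh (u,t) \<le> indicator {0..1} u * eh (u,t)"
    using elim(2) by eventually_elim (use x in \<open>auto simp: indicator_def\<close>)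
  then have "G x t \<le> G 1 t" unfolding G_def by (rule integral_mono_AE[OF i1 i2])
  ultimately show ?case using elim(3) by auto
qed

lemma G_deriv:
  assumes x: "x \<in> {0..1}"
  shows "AE t in lborel. t \<in> {0<..<1} \<longrightarrow> deriv (\<lambda>s. D x s) t = G x t"
proof -
  have "AE t in lborel. t \<in> {0<..<1} \<longrightarrow> ((\<lambda>s. D x s) has_real_derivative G x t) (at t)"
    by (rule lebesgue_diff[OF G_meas G_bnd[OF x]]) (use D_eq(2)[OF x] in auto)
  then show ?thesis by eventually_elim (auto intro: DERIV_imp_deriv)
qed

lemma nn1: "AE t in lborel. (\<integral>\<^sup>+u. ennreal (norm (eh (u,t))) \<partial>lborel) = indicator {0..1} t"
  using AE_int_t AE_nonneg_t G1
proof eventually_elim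
  case (elim t)
  show ?case
  proof (cases "t \<in> {0..1}")
    case True
    have "AE u in lborel. ennreal (norm (eh (u,t))) = ennreal (eh (u,t))"
      using elim(2) by eventually_elim simp
    then have "(\<integral>\<^sup>+u. ennreal (norm (eh (u,t))) \<partial>lborel) = (\<integral>\<^sup>+u. ennreal (eh (u,t)) \<partial>lborel)"
      by (rule nn_integral_cong_AE)
    also have "\<dots> = ennreal (\<integral>u. eh (u,t) \<partial>lborel)"
      by (rule nn_integral_eq_integral[OF elim(1) elim(2)])
    also have "(\<integral>u. eh (u,t) \<partial>lborel) = G 1 t"
      unfolding G_def by (intro Bochner_Integration.integral_cong refl) (auto simp: indicator_def eh_def)
    finally show ?thesis using True elim(3) by simp
  next
    case False
    then have "eh (u,t) = 0" for u by (auto intro: eh_zero)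
    then show ?thesis using False by simp
  qed
qed

end


lemma fst_meas_lborel[measurable]: "fst \<in> (lborel :: (real \<times> real) measure) \<rightarrow>\<^sub>M (lborel :: real measure)"
proof -
  have "fst \<in> (lborel \<Otimes>\<^sub>M lborel :: (real \<times> real) measure) \<rightarrow>\<^sub>M (lborel :: real measure)" by simp
  then show ?thesis by (simp only: lborel_prod)
qed

lemma snd_meas_lborel[measurable]: "snd \<in> (lborel :: (real \<times> real) measure) \<rightarrow>\<^sub>M (lborel :: real measure)"
proof -
  have "snd \<in> (lborel \<Otimes>\<^sub>M lborel :: (real \<times> real) measure) \<rightarrow>\<^sub>M (lborel :: real measure)" by simp
  then show ?thesis by (simp only: lborel_prod)
qed

lemma AE_swap_lborel:
  fixes P :: "real \<times> real \<Rightarrow> bool"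
  assumes P: "Measurable.pred borel P" and ae: "AE z in lborel. P z"
  shows "AE z in lborel. P (snd z, fst z)"
proof -
  have ae2: "AE z in lborel \<Otimes>\<^sub>M lborel. P z" using ae by (simp only: lborel_prod)
  have "AE z in distr (lborel \<Otimes>\<^sub>M lborel) (lborel \<Otimes>\<^sub>M lborel) (\<lambda>(x, y). (y, x)). P z"
    using ae2 by (simp only: lborel_pair.distr_pair_swap[symmetric])
  moreover have Pm: "{x \<in> space (lborel \<Otimes>\<^sub>M lborel). P x} \<in> sets (lborel \<Otimes>\<^sub>M lborel)"
    unfolding lborel_prod using P by measurable
  ultimately have "AE z in lborel \<Otimes>\<^sub>M lborel. P (case z of (x, y) \<Rightarrow> (y, x))"
    using AE_distr_iff[OF measurable_pair_swap' Pm] by simp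
  then have X: "AE z in lborel \<Otimes>\<^sub>M lborel. P (snd z, fst z)" by (simp add: case_prod_beta)
  then show ?thesis unfolding lborel_prod .
qed

lemma AE_sets_lborel:
  fixes P :: "'a::euclidean_space \<Rightarrow> 'b::euclidean_space \<Rightarrow> bool"
  assumes P: "{z \<in> space (lborel \<Otimes>\<^sub>M lborel). P (fst z) (snd z)} \<in> sets (lborel \<Otimes>\<^sub>M lborel)"
  shows "{x. AE y in lborel. P x y} \<in> sets borel"
proof -
  define S where "S = {z \<in> space (lborel \<Otimes>\<^sub>M lborel :: ('a \<times> 'b) measure). \<not> P (fst z) (snd z)}"
  have S: "S \<in> sets (lborel \<Otimes>\<^sub>M lborel)" unfolding S_def by (rule sets.sets_Collect_neg[OF P])
  have eq: "(AE y in lborel. P x y) \<longleftrightarrow> emeasure lborel (Pair x -` S) = 0" for x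
  proof (rule AE_iff_measurable)
    show "Pair x -` S \<in> sets lborel" using sets_Pair1[OF S] by simp
    show "{y \<in> space lborel. \<not> P x y} = Pair x -` S" by (auto simp: S_def space_pair_measure)
  qed
  have "(\<lambda>x. emeasure lborel (Pair x -` S)) \<in> borel_measurable lborel"
    using lborel.measurable_emeasure_Pair[OF S] .
  then have "{x \<in> space lborel. emeasure lborel (Pair x -` S) = 0} \<in> sets lborel"
    by measurable
  then show ?thesis unfolding eq by simp
qed

lemma is_density_swap:
  assumes d: "is_density C c"
  shows "is_density (\<lambda>x y. C y x) (\<lambda>z. c (snd z, fst z))"
proof -
  define ch where "ch z = indicator sq z * c z" for z
  have chi: "integrable lborel ch" using d unfolding is_density_def set_integrable_def ch_def by simp
  have chi2: "integrable (lborel \<Otimes>\<^sub>M lborel) ch" using chi by (simp only: lborel_prod)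
  have chm[measurable]: "ch \<in> borel_measurable (lborel \<Otimes>\<^sub>M lborel)" using chi2 by auto
  have sw: "integrable (lborel \<Otimes>\<^sub>M lborel) (\<lambda>(x,y). ch (y,x))"
    using lborel_pair.integrable_product_swap[OF chi2] .
  have eq1: "(\<lambda>(x,y). ch (y,x)) = (\<lambda>z. indicator sq z *\<^sub>R c (snd z, fst z))"
    by (auto simp: fun_eq_iff ch_def indicator_def)
  have "set_integrable lborel sq (\<lambda>z. c (snd z, fst z))"
    using sw unfolding eq1 set_integrable_def by (simp only: lborel_prod)
  moreover have "(\<lambda>x y. C y x) x y = set_lebesgue_integral lborel ({0..x} \<times> {0..y}) (\<lambda>z. c (snd z, fst z))"
    if x: "x \<in> {0..1}" and y: "y \<in> {0..1}" for x y
  proof -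
    define b where "b z = indicator ({0..y} \<times> {0..x}) z * ch z" for z
    have bm[measurable]: "b \<in> borel_measurable (lborel \<Otimes>\<^sub>M lborel)" unfolding b_def by measurable
    have "C y x = set_lebesgue_integral lborel ({0..y} \<times> {0..x}) c"
      using d x y unfolding is_density_def by blast
    also have "\<dots> = integral\<^sup>L (lborel \<Otimes>\<^sub>M lborel) b"
      unfolding set_lebesgue_integral_def b_def lborel_prod using x y
      by (intro Bochner_Integration.integral_cong refl) (auto simp: ch_def indicator_def)
    also have "\<dots> = (\<integral>(u,v). b (v,u) \<partial>(lborel \<Otimes>\<^sub>M lborel))"
      using lborel_pair.integral_product_swap[OF bm] by simp
    also have "\<dots> = set_lebesgue_integral lborel ({0..x} \<times> {0..y}) (\<lambda>z. c (snd z, fst z))"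
      unfolding set_lebesgue_integral_def b_def lborel_prod using x y
      by (intro Bochner_Integration.integral_cong refl) (auto simp: ch_def indicator_def)
    finally show ?thesis by simp
  qed
  ultimately show ?thesis unfolding is_density_def by blast
qed

lemma norm_integral_le_nn:
  fixes f :: "'a \<Rightarrow> real"
  shows "ennreal (norm (integral\<^sup>L M f)) \<le> (\<integral>\<^sup>+x. norm (f x) \<partial>M)"
proof (cases "integrable M f")
  case True
  then show ?thesis by (rule integral_norm_bound_ennreal)
next
  case False
  then show ?thesis by (simp add: not_integrable_integral_eq)
qed

lemma (in dens_setup) G_out: "t \<notin> {0..1} \<Longrightarrow> G x t = 0"
  unfolding G_def by (simp add: eh_zero)


lemma nn_prod_sep:
  fixes A B :: "real \<Rightarrow> ennreal"
  assumes [measurable]: "A \<in> borel_measurable lborel" "B \<in> borel_measurable lborel"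
  shows "(\<integral>\<^sup>+ z. A (fst z) * B (snd z) \<partial>(lborel :: (real \<times> real) measure)) = (\<integral>\<^sup>+ u. A u \<partial>lborel) * (\<integral>\<^sup>+ v. B v \<partial>lborel)"
proof -
  have "(\<integral>\<^sup>+ z. A (fst z) * B (snd z) \<partial>(lborel :: (real \<times> real) measure)) =
        (\<integral>\<^sup>+ z. A (fst z) * B (snd z) \<partial>(lborel \<Otimes>\<^sub>M lborel))" by (simp only: lborel_prod)
  also have "\<dots> = (\<integral>\<^sup>+ u. (\<integral>\<^sup>+ v. A u * B v \<partial>lborel) \<partial>lborel)"
    using sigma_finite_measure.nn_integral_fst[OF sigma_finite_lborel, of "\<lambda>z. A (fst z) * B (snd z)" lborel]
    by simp
  also have "\<dots> = (\<integral>\<^sup>+ u. A u * (\<integral>\<^sup>+ v. B v \<partial>lborel) \<partial>lborel)"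
    by (simp add: nn_integral_cmult)
  also have "\<dots> = (\<integral>\<^sup>+ u. A u \<partial>lborel) * (\<integral>\<^sup>+ v. B v \<partial>lborel)"
    by (simp add: nn_integral_multc)
  finally show ?thesis .
qed

locale step_setup =
  fixes D :: "real \<Rightarrow> real \<Rightarrow> real" and e :: "real \<times> real \<Rightarrow> real"
    and C :: "real \<Rightarrow> real \<Rightarrow> real" and c :: "real \<times> real \<Rightarrow> real" and a K :: real
  assumes dD: "is_density D e" and dC: "is_density C c"
    and a: "a > 0" "AE z in lborel. z \<in> sq \<longrightarrow> a \<le> e z"
    and K: "K > 0" "AE z in lborel. z \<in> sq \<longrightarrow> K \<le> c z"
    and bD1: "\<And>s. s \<in> {0..1} \<Longrightarrow> D 1 s = s" and bD2: "\<And>s. s \<in> {0..1} \<Longrightarrow> D s 1 = s"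
    and bC1: "\<And>s. s \<in> {0..1} \<Longrightarrow> C 1 s = s" and bC2: "\<And>s. s \<in> {0..1} \<Longrightarrow> C s 1 = s"
begin

lemma cK: "AE z in lborel. z \<in> sq \<longrightarrow> K \<le> c (snd z, fst z)"
proof -
  define ch where "ch z = indicator sq z * c z" for z
  have chi: "integrable lborel ch" using dC unfolding is_density_def set_integrable_def ch_def by simp
  have chm[measurable]: "ch \<in> borel_measurable borel" using borel_measurable_integrable[OF chi] by simp
  have "AE z in lborel. z \<in> sq \<longrightarrow> K \<le> ch z" using K(2) by eventually_elim (auto simp: ch_def)
  moreover have pm: "Measurable.pred borel (\<lambda>z. z \<in> sq \<longrightarrow> K \<le> ch z)"
  proof -
    have s1: "ch -` {K..} \<inter> space borel \<in> sets borel" by (rule measurable_sets[OF chm]) simp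
    have s2: "space borel - sq \<in> sets borel" by (intro sets.compl_sets borel_closed closed_Times) auto
    have "{z \<in> space borel. z \<in> sq \<longrightarrow> K \<le> ch z} = (space borel - sq) \<union> (ch -` {K..} \<inter> space borel)"
      by auto
    then show ?thesis unfolding pred_def using s1 s2 by (metis sets.Un)
  qed
  ultimately have "AE z in lborel. (snd z, fst z) \<in> sq \<longrightarrow> K \<le> ch (snd z, fst z)"
    using AE_swap_lborel[OF pm] by blast
  then show ?thesis by eventually_elim (auto simp: ch_def)
qed

sublocale Dd: dens_setup D e
proof
  show "is_density D e" by (rule dD)
  show "AE z in lborel. z \<in> sq \<longrightarrow> 0 \<le> e z" using a(2) by eventually_elim (use a(1) in auto)
  show "D 1 s = s" if "s \<in> {0..1}" for s using bD1 that .
qed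

sublocale Cc: dens_setup "\<lambda>x y. C y x" "\<lambda>z. c (snd z, fst z)"
proof
  show "is_density (\<lambda>x y. C y x) (\<lambda>z. c (snd z, fst z))" by (rule is_density_swap[OF dC])
  show "AE z in lborel. z \<in> sq \<longrightarrow> 0 \<le> c (snd z, fst z)" using cK by eventually_elim (use K(1) in auto)
  show "C s 1 = s" if "s \<in> {0..1}" for s using bC2 that .
qed

lemmas [measurable] = Dd.eh_meas2 Cc.eh_meas2 Dd.G_meas Cc.G_meas Dd.eh_meas Cc.eh_meas

definition f :: "real \<times> real \<Rightarrow> real" where
  "f z = (\<integral>t. Dd.eh (fst z, t) * Cc.eh (snd z, t) \<partial>lborel)"

lemma Phi_meas[measurable]:
  "(\<lambda>(z,t). Dd.eh (fst z, t) * Cc.eh (snd z, t)) \<in> borel_measurable ((lborel :: (real \<times> real) measure) \<Otimes>\<^sub>M lborel)"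
  by measurable

lemma f_meas[measurable]: "f \<in> borel_measurable (lborel :: (real \<times> real) measure)"
  unfolding f_def by measurable

lemma f_meas2[measurable]: "f \<in> borel_measurable (lborel \<Otimes>\<^sub>M lborel)"
  using f_meas by (simp only: lborel_prod)

lemma Phi_int:
  "integrable ((lborel :: (real \<times> real) measure) \<Otimes>\<^sub>M lborel) (\<lambda>(z,t). Dd.eh (fst z, t) * Cc.eh (snd z, t))"
proof (rule integrableI_bounded)
  show "(\<lambda>(z,t). Dd.eh (fst z, t) * Cc.eh (snd z, t)) \<in> borel_measurable ((lborel :: (real \<times> real) measure) \<Otimes>\<^sub>M lborel)"
    by measurable
  have "(\<integral>\<^sup>+ p. ennreal (norm (case p of (z,t) \<Rightarrow> Dd.eh (fst z, t) * Cc.eh (snd z, t)))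
          \<partial>((lborel :: (real \<times> real) measure) \<Otimes>\<^sub>M lborel))
      = (\<integral>\<^sup>+ t. (\<integral>\<^sup>+ z. ennreal (norm (Dd.eh (fst z, t) * Cc.eh (snd z, t))) \<partial>lborel) \<partial>lborel)"
    by (subst lborel_pair.nn_integral_snd[symmetric]) (auto simp: case_prod_beta)
  also have "\<dots> = (\<integral>\<^sup>+ t. (\<integral>\<^sup>+ u. ennreal (norm (Dd.eh (u, t))) \<partial>lborel) *
                        (\<integral>\<^sup>+ v. ennreal (norm (Cc.eh (v, t))) \<partial>lborel) \<partial>lborel)"
  proof (intro nn_integral_cong)
    fix t :: real
    have "(\<integral>\<^sup>+ z. ennreal (norm (Dd.eh (fst z, t) * Cc.eh (snd z, t))) \<partial>lborel) =
          (\<integral>\<^sup>+ z. ennreal (norm (Dd.eh (fst z, t))) * ennreal (norm (Cc.eh (snd z, t))) \<partial>lborel)"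
      by (intro nn_integral_cong) (simp add: abs_mult ennreal_mult)
    also have "\<dots> = (\<integral>\<^sup>+ u. ennreal (norm (Dd.eh (u, t))) \<partial>lborel) *
                        (\<integral>\<^sup>+ v. ennreal (norm (Cc.eh (v, t))) \<partial>lborel)"
      by (rule nn_prod_sep) measurable
    finally show "(\<integral>\<^sup>+ z. ennreal (norm (Dd.eh (fst z, t) * Cc.eh (snd z, t))) \<partial>lborel) =
          (\<integral>\<^sup>+ u. ennreal (norm (Dd.eh (u, t))) \<partial>lborel) *
                        (\<integral>\<^sup>+ v. ennreal (norm (Cc.eh (v, t))) \<partial>lborel)" .
  qed
  also have "\<dots> = (\<integral>\<^sup>+ t. indicator {0..1::real} t \<partial>lborel)"
  proof -
    have X: "AE t in lborel. (\<integral>\<^sup>+ u. ennreal (norm (Dd.eh (u, t))) \<partial>lborel) *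
                        (\<integral>\<^sup>+ v. ennreal (norm (Cc.eh (v, t))) \<partial>lborel) = indicator {0..1} t"
      using Dd.nn1 Cc.nn1 by eventually_elim (simp split: split_indicator)
    show ?thesis using nn_integral_cong_AE[OF X] by simp
  qed
  also have "\<dots> = 1" by simp
  finally show "(\<integral>\<^sup>+ p. ennreal (norm (case p of (z,t) \<Rightarrow> Dd.eh (fst z, t) * Cc.eh (snd z, t)))
          \<partial>((lborel :: (real \<times> real) measure) \<Otimes>\<^sub>M lborel)) < \<infinity>" by simp
qed

lemma f_int: "integrable lborel f"
  using lborel_pair.integrable_fst'[OF Phi_int] unfolding f_def by simp

lemma AE_int_z: "AE z in lborel. integrable lborel (\<lambda>t. Dd.eh (fst z, t) * Cc.eh (snd z, t))"
  using lborel_pair.AE_integrable_fst'[OF Phi_int] by simp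

lemma fold_eq:
  assumes x: "x \<in> {0..1}" and y: "y \<in> {0..1}"
  shows "fold_prod D C x y = (\<integral>t. Dd.G x t * Cc.G y t \<partial>lborel)"
proof -
  define \<phi> where "\<phi> t = indicator {0..1} t *\<^sub>R (deriv (\<lambda>s. D x s) t * deriv (\<lambda>s. C s y) t)" for t :: real
  define \<psi> where "\<psi> t = Dd.G x t * Cc.G y t" for t
  have \<psi>m: "\<psi> \<in> borel_measurable lborel" unfolding \<psi>_def by measurable
  have ae: "AE t in lborel. \<phi> t = \<psi> t"
    using Dd.G_deriv[OF x] Cc.G_deriv[OF y] AE_lborel_singleton[of 0] AE_lborel_singleton[of 1]
  proof eventually_elim
    case (elim t)
    show ?case
    proof (cases "t \<in> {0..1}")
      case True
      then have "t \<in> {0<..<1}" using elim(3,4) by auto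
      then show ?thesis using elim(1,2) True by (simp add: \<phi>_def \<psi>_def)
    next
      case False
      then show ?thesis by (simp add: \<phi>_def \<psi>_def Dd.G_out)
    qed
  qed
  then have ae': "AE t in lebesgue. \<phi> t = \<psi> t" by (rule AE_completion)
  have \<psi>m': "\<psi> \<in> borel_measurable lebesgue" using \<psi>m by (simp add: measurable_completion)
  have \<phi>m': "\<phi> \<in> borel_measurable lebesgue" by (rule AE_complete_meas[OF \<psi>m' ae'])
  have "fold_prod D C x y = integral\<^sup>L lebesgue \<phi>"
    unfolding fold_prod_def set_lebesgue_integral_def \<phi>_def by simp
  also have "\<dots> = integral\<^sup>L lebesgue \<psi>" by (rule integral_cong_AE[OF \<phi>m' \<psi>m' ae'])
  also have "\<dots> = integral\<^sup>L lborel \<psi>" using \<psi>m by (intro integral_completion) simp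
  finally show ?thesis unfolding \<psi>_def .
qed

end


context step_setup
begin

lemma Cc_G_abs: "AE t in lborel. \<bar>Cc.G y t\<bar> \<le> 1" if y: "y \<in> {0..1}" for y
  using Cc.G_bnd[OF y]
proof eventually_elim
  case (elim t)
  then show ?case by (cases "t \<in> {0..1}") (auto simp: Cc.G_out)
qed

lemma box_eq:
  assumes x: "x \<in> {0..1}" and y: "y \<in> {0..1}"
  shows "set_lebesgue_integral lborel ({0..x} \<times> {0..y}) f = (\<integral>t. Dd.G x t * Cc.G y t \<partial>lborel)"
proof -
  define w where "w u t = indicator {0..x} u * Dd.eh (u,t)" for u t :: real
  have AEu: "AE u in lborel. integrable lborel (\<lambda>t. Dd.eh (u,t))"
    using lborel_pair.AE_integrable_fst[of "\<lambda>u t. Dd.eh (u,t)"] Dd.eh_int2 by simp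
  have step1: "AE u in lborel. (\<integral>v. indicator ({0..x} \<times> {0..y}) (u,v) * f (u,v) \<partial>lborel)
                 = (\<integral>t. w u t * Cc.G y t \<partial>lborel)"
    using AEu
  proof eventually_elim
    case (elim u)
    have wi: "integrable lborel (w u)"
      unfolding w_def using integrable_mult_right[of "indicator {0..x} u" lborel "\<lambda>t. Dd.eh (u,t)"] elim by simp
    define F2 where "F2 t v = w u t * (indicator {0..y} v * Cc.eh (v,t))" for t v :: real
    have F2m[measurable]: "case_prod F2 \<in> borel_measurable (lborel \<Otimes>\<^sub>M lborel)"
      unfolding F2_def w_def by measurable
    have nv: "(\<integral>v. norm (F2 t v) \<partial>lborel) = \<bar>w u t\<bar> * (\<integral>v. \<bar>indicator {0..y} v * Cc.eh (v,t)\<bar> \<partial>lborel)" for t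
      unfolding F2_def by (simp add: abs_mult)
    have bnd: "AE t in lborel. norm (\<integral>v. norm (F2 t v) \<partial>lborel) \<le> norm (w u t)"
      using Cc.AE_nonneg_t Cc.AE_int_t Cc_G_abs[OF y]
    proof eventually_elim
      case (elim t)
      have "AE v in lborel. \<bar>indicator {0..y} v * Cc.eh (v,t)\<bar> = indicator {0..y} v * Cc.eh (v,t)"
        using elim(1) by eventually_elim (simp add: abs_mult)
      then have "(\<integral>v. \<bar>indicator {0..y} v * Cc.eh (v,t)\<bar> \<partial>lborel) = Cc.G y t"
        unfolding Cc.G_def by (intro integral_cong_AE) auto
      then have "(\<integral>v. norm (F2 t v) \<partial>lborel) = \<bar>w u t\<bar> * Cc.G y t" using nv[of t] by simp
      moreover have "\<bar>\<bar>w u t\<bar> * Cc.G y t\<bar> \<le> \<bar>w u t\<bar>"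
        using elim(3) by (simp add: abs_mult mult_left_le)
      ultimately show ?case by simp
    qed
    have F2i: "integrable (lborel \<Otimes>\<^sub>M lborel) (case_prod F2)"
    proof (rule lborel_pair.Fubini_integrable)
      show "case_prod F2 \<in> borel_measurable (lborel \<Otimes>\<^sub>M lborel)" by (rule F2m)
      show "integrable lborel (\<lambda>t. \<integral>v. norm (case_prod F2 (t, v)) \<partial>lborel)"
        using Bochner_Integration.integrable_bound[OF wi _ bnd] by simp
      show "AE t in lborel. integrable lborel (\<lambda>v. case_prod F2 (t, v))"
        using Cc.AE_int_t
      proof eventually_elim
        case (elim t)
        have "integrable lborel (\<lambda>v. indicator {0..y} v * Cc.eh (v,t))"
          using integrable_mult_indicator[OF _ elim, of "{0..y}"] by simp
        then show ?case unfolding F2_def by simp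
      qed
    qed
    have "(\<integral>v. (\<integral>t. F2 t v \<partial>lborel) \<partial>lborel) = (\<integral>t. (\<integral>v. F2 t v \<partial>lborel) \<partial>lborel)"
      using lborel_pair.Fubini_integral[OF F2i] .
    moreover have "(\<integral>t. F2 t v \<partial>lborel) = indicator ({0..x} \<times> {0..y}) (u,v) * f (u,v)" for v
    proof -
      have "(\<integral>t. F2 t v \<partial>lborel) = (\<integral>t. (indicator {0..x} u * indicator {0..y} v) *
                 (Dd.eh (u,t) * Cc.eh (v,t)) \<partial>lborel)"
        unfolding F2_def w_def by (simp add: mult_ac)
      also have "\<dots> = indicator ({0..x} \<times> {0..y}) (u,v) * f (u,v)"
        by (simp add: f_def indicator_times)
      finally show ?thesis .
    qed
    moreover have "(\<integral>v. F2 t v \<partial>lborel) = w u t * Cc.G y t" for t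
      unfolding F2_def Cc.G_def by simp
    ultimately show ?case by simp
  qed
  have fbi: "integrable (lborel \<Otimes>\<^sub>M lborel) (\<lambda>z. indicator ({0..x} \<times> {0..y}) z * f z)"
  proof -
    have bs: "{0..x} \<times> {0..y} \<in> sets (borel :: (real \<times> real) measure)"
      by (intro borel_closed closed_Times) auto
    show ?thesis using integrable_mult_indicator[OF _ f_int, of "{0..x} \<times> {0..y}"] bs by (simp add: lborel_prod)
  qed
  have F3i: "integrable (lborel \<Otimes>\<^sub>M lborel) (\<lambda>(u,t). w u t * Cc.G y t)"
  proof (rule Bochner_Integration.integrable_bound[OF Dd.eh_int2])
    show "(\<lambda>(u,t). w u t * Cc.G y t) \<in> borel_measurable (lborel \<Otimes>\<^sub>M lborel)"
      unfolding w_def by measurable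
    have "AE z in lborel \<Otimes>\<^sub>M lborel. \<bar>Cc.G y (snd z)\<bar> \<le> 1"
    proof (rule lborel_pair.AE_pair_measure)
      show "{z \<in> space (lborel \<Otimes>\<^sub>M lborel). \<bar>Cc.G y (snd z)\<bar> \<le> 1} \<in> sets (lborel \<Otimes>\<^sub>M lborel)"
        by measurable
      show "AE u in lborel. AE t in lborel. \<bar>Cc.G y (snd (u, t))\<bar> \<le> 1"
        using Cc_G_abs[OF y] by simp
    qed
    then show "AE z in lborel \<Otimes>\<^sub>M lborel. norm ((\<lambda>(u,t). w u t * Cc.G y t) z) \<le> norm (Dd.eh z)"
    proof eventually_elim
      case (elim z)
      have "\<bar>indicator {0..x} (fst z) * Dd.eh z * Cc.G y (snd z)\<bar> \<le> \<bar>Dd.eh z\<bar>"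
        using elim by (auto simp: abs_mult indicator_def mult_left_le)
      then show ?case by (simp add: w_def case_prod_beta)
    qed
  qed
  have "set_lebesgue_integral lborel ({0..x} \<times> {0..y}) f =
        integral\<^sup>L (lborel \<Otimes>\<^sub>M lborel) (\<lambda>z. indicator ({0..x} \<times> {0..y}) z * f z)"
    unfolding set_lebesgue_integral_def by (simp add: lborel_prod)
  also have "\<dots> = (\<integral>u. (\<integral>v. indicator ({0..x} \<times> {0..y}) (u,v) * f (u,v) \<partial>lborel) \<partial>lborel)"
    using lborel_pair.integral_fst'[OF fbi] by simp
  also have "\<dots> = (\<integral>u. (\<integral>t. w u t * Cc.G y t \<partial>lborel) \<partial>lborel)"
    by (rule integral_cong_AE[OF _ _ step1]) (unfold w_def, measurable)
  also have "\<dots> = (\<integral>t. (\<integral>u. w u t * Cc.G y t \<partial>lborel) \<partial>lborel)"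
    using lborel_pair.Fubini_integral[of "\<lambda>u t. w u t * Cc.G y t"] F3i by simp
  also have "\<dots> = (\<integral>t. Dd.G x t * Cc.G y t \<partial>lborel)"
    unfolding w_def Dd.G_def by (simp add: mult.commute)
  finally show ?thesis .
qed

end


context step_setup
begin

lemma f_lower: "AE z in lborel. z \<in> sq \<longrightarrow> a * K \<le> f z"
proof -
  define Q1 where "Q1 u = (AE t in lborel. 0 \<le> u \<and> u \<le> 1 \<and> 0 \<le> t \<and> t \<le> 1 \<longrightarrow> a \<le> Dd.eh (u,t))" for u
  define Q2 where "Q2 v = (AE t in lborel. 0 \<le> v \<and> v \<le> 1 \<and> 0 \<le> t \<and> t \<le> 1 \<longrightarrow> K \<le> Cc.eh (v,t))" for v
  have P1: "AE z in lborel \<Otimes>\<^sub>M lborel. 0 \<le> fst z \<and> fst z \<le> 1 \<and> 0 \<le> snd z \<and> snd z \<le> 1 \<longrightarrow> a \<le> Dd.eh (fst z, snd z)"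
  proof -
    have "AE z in lborel. 0 \<le> fst z \<and> fst z \<le> 1 \<and> 0 \<le> snd z \<and> snd z \<le> 1 \<longrightarrow> a \<le> Dd.eh (fst z, snd z)"
      using a(2) by eventually_elim (auto simp: Dd.eh_def mem_Times_iff)
    then show ?thesis unfolding lborel_prod .
  qed
  have P2: "AE z in lborel \<Otimes>\<^sub>M lborel. 0 \<le> fst z \<and> fst z \<le> 1 \<and> 0 \<le> snd z \<and> snd z \<le> 1 \<longrightarrow> K \<le> Cc.eh (fst z, snd z)"
  proof -
    have "AE z in lborel. 0 \<le> fst z \<and> fst z \<le> 1 \<and> 0 \<le> snd z \<and> snd z \<le> 1 \<longrightarrow> K \<le> Cc.eh (fst z, snd z)"
      using cK by eventually_elim (auto simp: Cc.eh_def mem_Times_iff)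
    then show ?thesis unfolding lborel_prod .
  qed
  have AQ1: "AE u in lborel. Q1 u" unfolding Q1_def using lborel_pair.AE_pair[OF P1] by simp
  have AQ2: "AE v in lborel. Q2 v" unfolding Q2_def using lborel_pair.AE_pair[OF P2] by simp
  have mQ1: "{u. Q1 u} \<in> sets borel" unfolding Q1_def
    by (rule AE_sets_lborel[where P="\<lambda>u t. 0 \<le> u \<and> u \<le> 1 \<and> 0 \<le> t \<and> t \<le> 1 \<longrightarrow> a \<le> Dd.eh (u,t)"]) measurable
  have mQ2: "{v. Q2 v} \<in> sets borel" unfolding Q2_def
    by (rule AE_sets_lborel[where P="\<lambda>u t. 0 \<le> u \<and> u \<le> 1 \<and> 0 \<le> t \<and> t \<le> 1 \<longrightarrow> K \<le> Cc.eh (u,t)"]) measurable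
  have pQ1[measurable]: "Measurable.pred lborel Q1" using mQ1 by (simp add: pred_def)
  have pQ2[measurable]: "Measurable.pred lborel Q2" using mQ2 by (simp add: pred_def)
  have "AE z in lborel \<Otimes>\<^sub>M lborel. Q1 (fst z) \<and> Q2 (snd z)"
  proof (rule lborel_pair.AE_pair_measure)
    show "{x \<in> space (lborel \<Otimes>\<^sub>M lborel). Q1 (fst x) \<and> Q2 (snd x)} \<in> sets (lborel \<Otimes>\<^sub>M lborel)"
      by measurable
    show "AE x in lborel. AE y in lborel. Q1 (fst (x, y)) \<and> Q2 (snd (x, y))"
      using AQ1
    proof eventually_elim
      case (elim u)
      show ?case using AQ2 by eventually_elim (simp add: elim)
    qed
  qed
  then have AQ: "AE z in lborel. Q1 (fst z) \<and> Q2 (snd z)" unfolding lborel_prod .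
  show ?thesis
    using AQ AE_int_z
  proof eventually_elim
    case (elim z)
    show ?case
    proof
      assume z: "z \<in> sq"
      have i1: "integrable lborel (\<lambda>t. indicator {0..1::real} t * (a * K))" by simp
      have "AE t in lborel. indicator {0..1} t * (a * K) \<le> Dd.eh (fst z, t) * Cc.eh (snd z, t)"
      proof -
        have q1: "Q1 (fst z)" and q2: "Q2 (snd z)" using elim(1) by auto
        show ?thesis using q1 q2 unfolding Q1_def Q2_def
      proof eventually_elim
        case (elim t)
        show ?case
        proof (cases "t \<in> {0..1}")
          case True
          then have "a \<le> Dd.eh (fst z, t)" "K \<le> Cc.eh (snd z, t)"
            using elim z by (auto simp: mem_Times_iff)
          then have "a * K \<le> Dd.eh (fst z, t) * Cc.eh (snd z, t)"
            using a(1) K(1) by (intro mult_mono) auto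
          then show ?thesis using True by simp
        next
          case False
          then have "Dd.eh (fst z, t) = 0" by (intro Dd.eh_zero) auto
          then show ?thesis using False by simp
        qed
      qed
      qed
      then have "(\<integral>t. indicator {0..1::real} t * (a * K) \<partial>lborel) \<le> f z"
        unfolding f_def by (rule integral_mono_AE[OF i1 elim(2)])
      then show "a * K \<le> f z" by simp
    qed
  qed
qed

lemma bnd1: "y \<in> {0..1} \<Longrightarrow> fold_prod D C 1 y = y"
proof -
  assume y: "y \<in> {0..1}"
  have "AE t in lborel. Dd.G 1 t * Cc.G y t = indicator {0..1} t * Cc.G y t"
    using Dd.G1 by eventually_elim (auto simp: Cc.G_out indicator_def)
  then have "(\<integral>t. Dd.G 1 t * Cc.G y t \<partial>lborel) = (\<integral>t. indicator {0..1} t * Cc.G y t \<partial>lborel)"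
    by (rule integral_cong_AE[rotated 2]) measurable
  also have "\<dots> = C 1 y" using Cc.D_eq(2)[OF y, of 1] by (simp add: set_lebesgue_integral_def)
  finally show ?thesis using fold_eq[of 1 y] y bC1 by simp
qed

lemma bnd2: "x \<in> {0..1} \<Longrightarrow> fold_prod D C x 1 = x"
proof -
  assume x: "x \<in> {0..1}"
  have "AE t in lborel. Dd.G x t * Cc.G 1 t = indicator {0..1} t * Dd.G x t"
    using Cc.G1 by eventually_elim (auto simp: Dd.G_out indicator_def)
  then have "(\<integral>t. Dd.G x t * Cc.G 1 t \<partial>lborel) = (\<integral>t. indicator {0..1} t * Dd.G x t \<partial>lborel)"
    by (rule integral_cong_AE[rotated 2]) measurable
  also have "\<dots> = D x 1" using Dd.D_eq(2)[OF x, of 1] by (simp add: set_lebesgue_integral_def)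
  finally show ?thesis using fold_eq[of x 1] x bD2 by simp
qed

lemma step:
  "is_density (fold_prod D C) f \<and> (AE z in lborel. z \<in> sq \<longrightarrow> a * K \<le> f z) \<and>
   (\<forall>s\<in>{0..1}. fold_prod D C 1 s = s) \<and> (\<forall>s\<in>{0..1}. fold_prod D C s 1 = s)"
proof (intro conjI ballI)
  have sqs: "sq \<in> sets (borel :: (real \<times> real) measure)"
    by (intro borel_closed closed_Times) auto
  have "set_integrable lborel sq f"
    unfolding set_integrable_def using integrable_mult_indicator[OF _ f_int, of sq] sqs by simp
  moreover have "fold_prod D C x y = set_lebesgue_integral lborel ({0..x} \<times> {0..y}) f"
    if "x \<in> {0..1}" "y \<in> {0..1}" for x y
    using fold_eq[OF that] box_eq[OF that] by simp
  ultimately show "is_density (fold_prod D C) f" unfolding is_density_def by blast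
  show "AE z in lborel. z \<in> sq \<longrightarrow> a * K \<le> f z" by (rule f_lower)
  show "fold_prod D C 1 s = s" if "s \<in> {0..1}" for s using bnd1 that .
  show "fold_prod D C s 1 = s" if "s \<in> {0..1}" for s using bnd2 that .
qed

end


lemma dens_unique:
  assumes d1: "is_density D d1" and d2: "is_density D d2"
  shows "AE z in lborel. z \<in> sq \<longrightarrow> d1 z = d2 z"
proof -
  define f1 where "f1 z = indicator sq z * d1 z" for z
  define f2 where "f2 z = indicator sq z * d2 z" for z
  have i1: "integrable lborel f1" using d1 unfolding is_density_def set_integrable_def f1_def by simp
  have i2: "integrable lborel f2" using d2 unfolding is_density_def set_integrable_def f2_def by simp
  have box: "set_lebesgue_integral lborel {..p} (\<lambda>z. indicator sq z * d z) =
      set_lebesgue_integral lborel ({0..min (fst p) 1} \<times> {0..min (snd p) 1}) d" for p :: "real \<times> real" and d :: "real \<times> real \<Rightarrow> real"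
    unfolding set_lebesgue_integral_def
    by (intro Bochner_Integration.integral_cong refl) (auto simp: indicator_def less_eq_prod_def mem_Times_iff)
  have "AE z in lborel. f1 z = f2 z"
  proof (rule unique_atMost[OF i1 i2])
    fix p :: "real \<times> real"
    show "set_lebesgue_integral lborel {..p} f1 = set_lebesgue_integral lborel {..p} f2"
    proof (cases "0 \<le> fst p \<and> 0 \<le> snd p")
      case True
      then have m: "min (fst p) 1 \<in> {0..1}" "min (snd p) 1 \<in> {0..1}" by auto
      have e1: "D (min (fst p) 1) (min (snd p) 1) = set_lebesgue_integral lborel ({0..min (fst p) 1} \<times> {0..min (snd p) 1}) d1"
        using d1 m unfolding is_density_def by blast
      have e2: "D (min (fst p) 1) (min (snd p) 1) = set_lebesgue_integral lborel ({0..min (fst p) 1} \<times> {0..min (snd p) 1}) d2"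
        using d2 m unfolding is_density_def by blast
      show ?thesis unfolding f1_def f2_def box using e1 e2 by simp
    next
      case False
      then have E: "{0..min (fst p) 1} \<times> {0..min (snd p) 1} = {}" by auto
      show ?thesis unfolding f1_def f2_def box E by (simp add: set_lebesgue_integral_def)
    qed
  qed
  then show ?thesis by eventually_elim (auto simp: f1_def f2_def)
qed

lemma measure_box: "x \<in> {0..1} \<Longrightarrow> y \<in> {0..1} \<Longrightarrow> measure lborel ({0..x::real} \<times> {0..y::real}) = x * y"
proof -
  assume x: "x \<in> {0..1}" and y: "y \<in> {0..1}"
  have "emeasure (lborel \<Otimes>\<^sub>M lborel) ({0..x::real} \<times> {0..y::real}) = emeasure lborel {0..x} * emeasure lborel {0..y}"
    by (rule lborel.emeasure_pair_measure_Times) auto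
  also have "\<dots> = ennreal x * ennreal y" using x y by simp
  also have "\<dots> = ennreal (x * y)" using x y by (intro ennreal_mult[symmetric]) auto
  finally have "emeasure lborel ({0..x::real} \<times> {0..y::real}) = ennreal (x * y)" by (simp only: lborel_prod)
  then show ?thesis using x y by (simp add: measure_def)
qed

lemma pow_good:
  assumes cop: "is_copula C" and dc: "is_density C c" and K: "K > 0"
    and cK: "AE z in lborel. z \<in> sq \<longrightarrow> K \<le> c z" and n: "n \<ge> 1"
  shows "\<exists>d. is_density (fold_pow C n) d \<and> (AE z in lborel. z \<in> sq \<longrightarrow> K ^ n \<le> d z) \<and>
             (\<forall>s\<in>{0..1}. fold_pow C n 1 s = s) \<and> (\<forall>s\<in>{0..1}. fold_pow C n s 1 = s)"
  using n
proof (induction n rule: dec_induct)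
  case base
  have b1: "\<forall>s\<in>{0..1}. C 1 s = s" and b2: "\<forall>s\<in>{0..1}. C s 1 = s" using cop unfolding is_copula_def by auto
  have f1: "fold_pow C 1 = C" by simp
  show ?case unfolding f1 power_one_right by (rule exI[of _ c]) (intro conjI dc cK b1 b2)
next
  case (step m)
  then obtain d where d: "is_density (fold_pow C m) d" "AE z in lborel. z \<in> sq \<longrightarrow> K ^ m \<le> d z"
      "\<forall>s\<in>{0..1}. fold_pow C m 1 s = s" "\<forall>s\<in>{0..1}. fold_pow C m s 1 = s" by blast
  have cb: "\<And>s. s \<in> {0..1} \<Longrightarrow> C 1 s = s" "\<And>s. s \<in> {0..1} \<Longrightarrow> C s 1 = s"
    using cop unfolding is_copula_def by auto
  interpret S: step_setup "fold_pow C m" d C c "K ^ m" K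
    by (rule step_setup.intro[OF d(1) dc _ d(2) K cK]) (use d(3,4) cb K in auto)
  obtain m' where m': "m = Suc m'" using step(1) by (cases m) auto
  have fp: "fold_pow C (Suc m) = fold_prod (fold_pow C m) C" unfolding m' by simp
  note st = S.step
  show ?case unfolding fp power_Suc2 by (rule exI[of _ S.f]) (rule st)
qed

theorem mainTheorem2:
  fixes C :: "real \<Rightarrow> real \<Rightarrow> real" and c :: "real \<times> real \<Rightarrow> real" and K :: real and n :: nat
  assumes "is_copula C"
    and "is_density C c"
    and "K > 0"
    and "AE z in lborel. z \<in> {0..1} \<times> {0..1} \<longrightarrow> K \<le> c z"
    and "n \<ge> 1"
  shows "(\<exists>d. is_density (fold_pow C n) d) \<and>
         (\<forall>d. is_density (fold_pow C n) d \<longrightarrow>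
              (AE z in lborel. z \<in> {0..1} \<times> {0..1} \<longrightarrow> K ^ n \<le> d z)) \<and>
         (\<forall>x\<in>{0..1}. \<forall>y\<in>{0..1}. fold_pow C n x y \<ge> x * y * K ^ n)"
proof -
  obtain d where d: "is_density (fold_pow C n) d" "AE z in lborel. z \<in> sq \<longrightarrow> K ^ n \<le> d z"
    using pow_good[OF assms] by blast
  have part2: "AE z in lborel. z \<in> sq \<longrightarrow> K ^ n \<le> d' z" if d': "is_density (fold_pow C n) d'" for d'
    using dens_unique[OF d(1) d'] d(2) by eventually_elim auto
  have part3: "fold_pow C n x y \<ge> x * y * K ^ n" if x: "x \<in> {0..1}" and y: "y \<in> {0..1}" for x y
  proof -
    define B where "B = {0..x} \<times> {0..y}"
    have Bs: "B \<in> sets (borel :: (real \<times> real) measure)" unfolding B_def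
      by (intro borel_closed closed_Times) auto
    have Bsq: "B \<subseteq> sq" using x y by (auto simp: B_def)
    have "emeasure (lborel \<Otimes>\<^sub>M lborel) B = emeasure lborel {0..x} * emeasure lborel {0..y}"
      unfolding B_def by (rule lborel.emeasure_pair_measure_Times) auto
    also have "\<dots> = ennreal x * ennreal y" using x y by simp
    finally have "emeasure lborel B = ennreal x * ennreal y" by (simp only: lborel_prod)
    then have Bf: "emeasure lborel B < \<infinity>" by (simp add: ennreal_mult_less_top)
    have eq: "fold_pow C n x y = set_lebesgue_integral lborel B d"
      using d(1) x y unfolding is_density_def B_def by blast
    have sisq: "set_integrable lborel sq d" using d(1) unfolding is_density_def by blast
    have si: "set_integrable lborel B d"
      by (rule set_integrable_subset[OF sisq]) (use Bs Bsq in auto)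
    have i1: "integrable lborel (\<lambda>z. indicator B z * K ^ n)" using Bs Bf by simp
    have i2: "integrable lborel (\<lambda>z. indicator B z * d z)" using si unfolding set_integrable_def by simp
    have "AE z in lborel. indicator B z * K ^ n \<le> indicator B z * d z"
      using d(2) by eventually_elim (use Bsq in \<open>auto simp: indicator_def\<close>)
    then have "(\<integral>z. indicator B z * K ^ n \<partial>lborel) \<le> (\<integral>z. indicator B z * d z \<partial>lborel)"
      by (rule integral_mono_AE[OF i1 i2])
    moreover have "(\<integral>z. indicator B z * K ^ n \<partial>lborel) = x * y * K ^ n"
      using Bs Bf measure_box[OF x y] by (simp add: B_def)
    moreover have mB: "measure lborel B = x * y" using measure_box[OF x y] by (simp add: B_def)
    ultimately show ?thesis unfolding eq set_lebesgue_integral_def by simp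
  qed
  show ?thesis
  proof (intro conjI)
    show "\<exists>d. is_density (fold_pow C n) d" using d(1) by blast
    show "\<forall>d. is_density (fold_pow C n) d \<longrightarrow>
              (AE z in lborel. z \<in> {0..1} \<times> {0..1} \<longrightarrow> K ^ n \<le> d z)" using part2 by blast
    show "\<forall>x\<in>{0..1}. \<forall>y\<in>{0..1}. fold_pow C n x y \<ge> x * y * K ^ n" using part3 by blast
  qed
qed


end
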